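(* Let $F$ be a field of characteristic $0$, $L=F(I)$ with $I^2=-1$, and $D=(V,E)$ a simply laced diagram on vertices $v_1,\dots,v_n$. For $1\le r\le n$ let $\mathfrak k_{\le r}$ be the Lie algebra with generators $X_1,\dots,X_r$ and relations $[X_i,[X_i,X_j]]=-X_j$ if $\{v_i,v_j\}\in E$, $[X_i,X_j]=0$ if $i\ne j$ and $\{v_i,v_j\}\notin E$ ($i,j\le r$). Let $1\le r<n$ and let $\rho:\mathfrak k_{\le r}\to\operatorname{End}(L^s)$ be a generalized spin representation. (a) If $v_{r+1}$ is adjacent to none of $v_1,\dots,v_r$, then $\rho$ extends to a generalized spin representation $\rho':\mathfrak k_{\le r+1}\to\operatorname{End}(L^s)$ with $\rho'(X_{r+1})=\tfrac12I\,\mathrm{id}_s$. (b) Otherwise, let $s_0$ be the sign automorphism of $\mathfrak k_{\le r}$ with $s_0(X_i)=-X_i$ if $\{v_i,v_{r+1}\}\in E$ and $s_0(X_i)=X_i$ otherwise. Then there is a generalized spin representation $\rho':\mathfrak k_{\le r+1}\to\operatorname{End}(L^s\oplus L^s)$ with $\rho'|_{\mathfrak k_{\le r}}=\rho\oplus(\rho\circ s_0)$ and $\rho'(X_{r+1})=\tfrac12 I\,\mathrm{id}_s\otimes\begin{pmatrix}0&1\\1&0\end{pmatrix}$, i.e. in block form $\rho'(X_{r+1})=\begin{pmatrix}0&\tfrac12 I\,\mathrm{id}_s\\ \tfrac12 I\,\mathrm{id}_s&0\end{pmatrix}$.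
   Context: $\mathfrak k_{\le r}$ is (by Berman's theorem) the maximal compact subalgebra of the Kac--Moody algebra over $F$ whose diagram is the subgraph of $D$ induced on $v_1,\dots,v_r$, with Berman generators $X_1,\dots,X_r$. A generalized spin representation of a Lie algebra given by such a presentation is a Lie algebra homomorphism $\rho$ into $\operatorname{End}(L^s)$ (over $F$) with $\rho(X_i)^2=-\tfrac14\mathrm{id}_s$ for all generators $X_i$. A sign automorphism is $X_i\mapsto\epsilon_iX_i$ with $\epsilon_i\in\{\pm1\}$. *)

theory Defs
  imports "Jordan_Normal_Form.Matrix"
begin

definition lie_br :: "'a::comm_ring_1 mat \<Rightarrow> 'a mat \<Rightarrow> 'a mat" where
  "lie_br A B = A * B - B * A"

text \<open>Simply laced diagram on vertices 1..n: a simple graph given by a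
  symmetric irreflexive adjacency relation E (vertex v_i is the number i).\<close>
definition simply_laced_diagram :: "nat \<Rightarrow> (nat \<Rightarrow> nat \<Rightarrow> bool) \<Rightarrow> bool" where
  "simply_laced_diagram n E \<longleftrightarrow>
     (\<forall>i j. E i j \<longrightarrow> E j i) \<and> (\<forall>i. \<not> E i i) \<and>
     (\<forall>i j. E i j \<longrightarrow> i \<in> {1..n} \<and> j \<in> {1..n})"

text \<open>By the universal
  property of a Lie algebra given by generators and relations, a Lie algebra
  homomorphism rho : k_{<=r} -> End(L^s) is the same as an assignment
  X_i |-> rho i (i = 1..r) of s x s matrices satisfying the defining relations;
  we represent rho by these generator images.\<close>
definition gen_spin_rep ::
  "(nat \<Rightarrow> nat \<Rightarrow> bool) \<Rightarrow> nat \<Rightarrow> nat \<Rightarrow> (nat \<Rightarrow> 'a::field mat) \<Rightarrow> bool" where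
  "gen_spin_rep E r s \<rho> \<longleftrightarrow>
     (\<forall>i\<in>{1..r}. \<rho> i \<in> carrier_mat s s) \<and>
     (\<forall>i\<in>{1..r}. \<rho> i * \<rho> i = smult_mat (- (1/4)) (one_mat s)) \<and>
     (\<forall>i\<in>{1..r}. \<forall>j\<in>{1..r}. E i j \<longrightarrow>
         lie_br (\<rho> i) (lie_br (\<rho> i) (\<rho> j)) = - \<rho> j) \<and>
     (\<forall>i\<in>{1..r}. \<forall>j\<in>{1..r}. i \<noteq> j \<and> \<not> E i j \<longrightarrow>
         lie_br (\<rho> i) (\<rho> j) = zero_mat s s)"

end

theory Submission
  imports Defs
begin

lemma minus_fb: assumes
  c1: "A1 \<in> carrier_mat nr1 nc1" "B1 \<in> carrier_mat nr1 nc2" "C1 \<in> carrier_mat nr2 nc1" "D1 \<in> carrier_mat nr2 nc2" and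
  c2: "A2 \<in> carrier_mat nr1 nc1" "B2 \<in> carrier_mat nr1 nc2" "C2 \<in> carrier_mat nr2 nc1" "D2 \<in> carrier_mat nr2 nc2"
  shows "four_block_mat A1 B1 C1 D1 - four_block_mat A2 B2 C2 D2
  = four_block_mat (A1 - A2) (B1 - B2) (C1 - C2) (D1 - D2)"
  by (rule eq_matI, insert assms, auto)
lemma uminus_fb: assumes
  c1: "A1 \<in> carrier_mat nr1 nc1" "B1 \<in> carrier_mat nr1 nc2" "C1 \<in> carrier_mat nr2 nc1" "D1 \<in> carrier_mat nr2 nc2"
  shows "- four_block_mat A1 B1 C1 D1 = four_block_mat (- A1) (- B1) (- C1) (- D1)"
  by (rule eq_matI, insert assms, auto)


lemma smult_minus_mat: "(A::'a::comm_ring_1 mat) \<in> carrier_mat n m \<Longrightarrow> B \<in> carrier_mat n m \<Longrightarrow> a \<cdot>\<^sub>m A - a \<cdot>\<^sub>m B = a \<cdot>\<^sub>m (A - B)"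
  by (rule eq_matI, auto simp: algebra_simps)

lemma smult_smult_mat: "a \<cdot>\<^sub>m (b \<cdot>\<^sub>m (A::'a::comm_ring_1 mat)) = (a*b) \<cdot>\<^sub>m A"
  by (rule eq_matI, auto)

lemma smult_diff_mat: "A \<in> carrier_mat n m \<Longrightarrow> a \<cdot>\<^sub>m A - b \<cdot>\<^sub>m A = (a-b) \<cdot>\<^sub>m (A::'a::comm_ring_1 mat)"
  by (rule eq_matI, auto simp: algebra_simps)
lemma smult_add_mat: "A \<in> carrier_mat n m \<Longrightarrow> a \<cdot>\<^sub>m A + b \<cdot>\<^sub>m A = (a+b) \<cdot>\<^sub>m (A::'a::comm_ring_1 mat)"
  by (rule eq_matI, auto simp: algebra_simps)
lemma zero_minus_zero_mat[simp]: "0\<^sub>m n m - 0\<^sub>m n m = (0\<^sub>m n m :: 'a::comm_ring_1 mat)"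
  by (rule eq_matI, auto)
lemma uminus_zero_mat'[simp]: "- 0\<^sub>m n m = (0\<^sub>m n m :: 'a::comm_ring_1 mat)"
  by (rule eq_matI, auto)
lemma uminus_smult_mat: "- (a \<cdot>\<^sub>m A) = (-a) \<cdot>\<^sub>m (A :: 'a::comm_ring_1 mat)"
  by (rule eq_matI, auto)
lemma zero_minus_mat: "A \<in> carrier_mat n m \<Longrightarrow> 0\<^sub>m n m - A = - (A :: 'a::comm_ring_1 mat)"
  by (rule eq_matI, auto)
lemma minus_zero_mat': "A \<in> carrier_mat n m \<Longrightarrow> A - 0\<^sub>m n m = (A :: 'a::comm_ring_1 mat)"
  by (rule eq_matI, auto)

lemma lie_smult: assumes "(A::'a::comm_ring_1 mat) \<in> carrier_mat n n" "B \<in> carrier_mat n n"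
  shows "lie_br (a \<cdot>\<^sub>m A) (b \<cdot>\<^sub>m B) = (a*b) \<cdot>\<^sub>m lie_br A B"
  using assms unfolding lie_br_def
  by (simp add: mult_smult_distrib[where nr=n and n=n and nc=n] mult_smult_assoc_mat[where nr=n and n=n and nc=n] smult_minus_mat[where n=n and m=n] smult_smult_mat mult.commute)

lemma fbD_mult: assumes "M \<in> carrier_mat s s" "N \<in> carrier_mat s s" "M' \<in> carrier_mat s s" "N' \<in> carrier_mat s s"
  shows "four_block_mat M (0\<^sub>m s s) (0\<^sub>m s s) N * four_block_mat M' (0\<^sub>m s s) (0\<^sub>m s s) N'
    = four_block_mat (M*M') (0\<^sub>m s s) (0\<^sub>m s s) (N*N' :: 'a::comm_ring_1 mat)"
  using assms by (subst mult_four_block_mat[where ?nr1.0=s and ?n1.0=s and ?nr2.0=s and ?n2.0=s and ?nc1.0=s and ?nc2.0=s], auto)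

lemma fbD_minus: assumes "M \<in> carrier_mat s s" "N \<in> carrier_mat s s" "M' \<in> carrier_mat s s" "N' \<in> carrier_mat s s"
  shows "four_block_mat M (0\<^sub>m s s) (0\<^sub>m s s) N - four_block_mat M' (0\<^sub>m s s) (0\<^sub>m s s) N'
    = four_block_mat (M-M') (0\<^sub>m s s) (0\<^sub>m s s) (N-N' :: 'a::comm_ring_1 mat)"
  using assms by (subst minus_fb[where ?nr1.0=s and ?nc1.0=s and ?nr2.0=s and ?nc2.0=s], auto)

lemma fbD_uminus: assumes "M \<in> carrier_mat s s" "N \<in> carrier_mat s s"
  shows "- four_block_mat M (0\<^sub>m s s) (0\<^sub>m s s) N 
    = four_block_mat (- M) (0\<^sub>m s s) (0\<^sub>m s s) (- N :: 'a::comm_ring_1 mat)"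
  using assms by (subst uminus_fb[where ?nr1.0=s and ?nc1.0=s and ?nr2.0=s and ?nc2.0=s], auto)

lemma fbD_lie: assumes "M \<in> carrier_mat s s" "N \<in> carrier_mat s s" "M' \<in> carrier_mat s s" "N' \<in> carrier_mat s s"
  shows "lie_br (four_block_mat M (0\<^sub>m s s) (0\<^sub>m s s) N) (four_block_mat M' (0\<^sub>m s s) (0\<^sub>m s s) N')
    = four_block_mat (lie_br M M') (0\<^sub>m s s) (0\<^sub>m s s) (lie_br N N' :: 'a::comm_ring_1 mat)"
  using assms unfolding lie_br_def by (simp add: fbD_mult fbD_minus)


lemma L_A:
  fixes R :: "'a::field_char_0 mat"
  assumes R: "R \<in> carrier_mat s s" and RR: "R * R = smult_mat (- (1/4)) (one_mat s)"
  shows "lie_br (four_block_mat R (zero_mat s s) (zero_mat s s) (smult_mat (-1) R)) (lie_br (four_block_mat R (zero_mat s s) (zero_mat s s) (smult_mat (-1) R)) (four_block_mat (zero_mat s s) (smult_mat c (one_mat s)) (smult_mat c (one_mat s)) (zero_mat s s)))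
   = - four_block_mat (zero_mat s s) (smult_mat c (one_mat s)) (smult_mat c (one_mat s)) (zero_mat s s)"
  using R unfolding lie_br_def
  apply (simp add: mult_four_block_mat[where ?nr1.0=s and ?n1.0=s and ?nr2.0=s and ?n2.0=s and ?nc1.0=s and ?nc2.0=s]
  mult_smult_distrib[where nr=s and n=s and nc=s]
  mult_smult_assoc_mat[where nr=s and n=s and nc=s] minus_fb[where ?nr1.0=s and ?nc1.0=s and ?nr2.0=s and ?nc2.0=s]
  uminus_fb[where ?nr1.0=s and ?nc1.0=s and ?nr2.0=s and ?nc2.0=s] minus_carrier_mat mult_carrier_mat smult_smult_mat
  smult_diff_mat smult_add_mat uminus_smult_mat zero_minus_mat minus_zero_mat' RR)
  apply (rule cong_four_block_mat; rule eq_matI)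
  apply (auto simp: algebra_simps)
  done

lemma L_B:
  fixes R :: "'a::field_char_0 mat"
  assumes R: "R \<in> carrier_mat s s" and cc: "c * c = - (1/4)"
  shows "lie_br (four_block_mat (zero_mat s s) (smult_mat c (one_mat s)) (smult_mat c (one_mat s)) (zero_mat s s)) (lie_br (four_block_mat (zero_mat s s) (smult_mat c (one_mat s)) (smult_mat c (one_mat s)) (zero_mat s s)) (four_block_mat R (zero_mat s s) (zero_mat s s) (smult_mat (-1) R)))
   = - four_block_mat R (zero_mat s s) (zero_mat s s) (smult_mat (-1) R)"
  using R unfolding lie_br_def
  apply (simp add: mult_four_block_mat[where ?nr1.0=s and ?n1.0=s and ?nr2.0=s and ?n2.0=s and ?nc1.0=s and ?nc2.0=s]
  mult_smult_distrib[where nr=s and n=s and nc=s]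
  mult_smult_assoc_mat[where nr=s and n=s and nc=s] minus_fb[where ?nr1.0=s and ?nc1.0=s and ?nr2.0=s and ?nc2.0=s]
  uminus_fb[where ?nr1.0=s and ?nc1.0=s and ?nr2.0=s and ?nc2.0=s] minus_carrier_mat mult_carrier_mat smult_smult_mat
  smult_diff_mat smult_add_mat uminus_smult_mat zero_minus_mat minus_zero_mat')
  apply (rule cong_four_block_mat; rule eq_matI)
  apply (auto simp: algebra_simps)
  by (simp_all add: mult.assoc[symmetric] cc)

lemma L_C:
  fixes R :: "'a::field_char_0 mat"
  assumes R: "R \<in> carrier_mat s s"
  shows "lie_br (four_block_mat R (zero_mat s s) (zero_mat s s) (smult_mat 1 R)) (four_block_mat (zero_mat s s) (smult_mat c (one_mat s)) (smult_mat c (one_mat s)) (zero_mat s s))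
   = zero_mat (2*s) (2*s)"
  using R unfolding lie_br_def mult_2
  apply (simp add: mult_four_block_mat[where ?nr1.0=s and ?n1.0=s and ?nr2.0=s and ?n2.0=s and ?nc1.0=s and ?nc2.0=s]
  mult_smult_distrib[where nr=s and n=s and nc=s]
  mult_smult_assoc_mat[where nr=s and n=s and nc=s] minus_fb[where ?nr1.0=s and ?nc1.0=s and ?nr2.0=s and ?nc2.0=s]
  uminus_fb[where ?nr1.0=s and ?nc1.0=s and ?nr2.0=s and ?nc2.0=s] minus_carrier_mat mult_carrier_mat smult_smult_mat
  smult_diff_mat smult_add_mat uminus_smult_mat zero_minus_mat minus_zero_mat' flip: four_block_zero_mat)
  apply (rule cong_four_block_mat; rule eq_matI)
  apply (auto simp: algebra_simps)
  done

lemma L_D: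
  fixes R :: "'a::field_char_0 mat"
  assumes R: "R \<in> carrier_mat s s"
  shows "lie_br (four_block_mat (zero_mat s s) (smult_mat c (one_mat s)) (smult_mat c (one_mat s)) (zero_mat s s)) (four_block_mat R (zero_mat s s) (zero_mat s s) (smult_mat 1 R))
   = zero_mat (2*s) (2*s)"
  using R unfolding lie_br_def mult_2
  apply (simp add: mult_four_block_mat[where ?nr1.0=s and ?n1.0=s and ?nr2.0=s and ?n2.0=s and ?nc1.0=s and ?nc2.0=s]
  mult_smult_distrib[where nr=s and n=s and nc=s]
  mult_smult_assoc_mat[where nr=s and n=s and nc=s] minus_fb[where ?nr1.0=s and ?nc1.0=s and ?nr2.0=s and ?nc2.0=s]
  uminus_fb[where ?nr1.0=s and ?nc1.0=s and ?nr2.0=s and ?nc2.0=s] minus_carrier_mat mult_carrier_mat smult_smult_mat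
  smult_diff_mat smult_add_mat uminus_smult_mat zero_minus_mat minus_zero_mat' flip: four_block_zero_mat)
  apply (rule cong_four_block_mat; rule eq_matI)
  apply (auto simp: algebra_simps)
  done

lemma L_E:
  fixes c :: "'a::field_char_0"
  assumes cc: "c * c = - (1/4)"
  shows "four_block_mat (zero_mat s s) (smult_mat c (one_mat s)) (smult_mat c (one_mat s)) (zero_mat s s) * four_block_mat (zero_mat s s) (smult_mat c (one_mat s)) (smult_mat c (one_mat s)) (zero_mat s s)
   = smult_mat (- (1/4)) (one_mat (2*s))"
  unfolding mult_2
  apply (simp add: mult_four_block_mat[where ?nr1.0=s and ?n1.0=s and ?nr2.0=s and ?n2.0=s and ?nc1.0=s and ?nc2.0=s]
  mult_smult_distrib[where nr=s and n=s and nc=s]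
  mult_smult_assoc_mat[where nr=s and n=s and nc=s] minus_fb[where ?nr1.0=s and ?nc1.0=s and ?nr2.0=s and ?nc2.0=s]
  uminus_fb[where ?nr1.0=s and ?nc1.0=s and ?nr2.0=s and ?nc2.0=s] minus_carrier_mat mult_carrier_mat smult_smult_mat
  smult_diff_mat smult_add_mat uminus_smult_mat zero_minus_mat minus_zero_mat' flip: four_block_one_mat)
  apply (subst smult_four_block_mat[where ?nr1.0=s and ?nc1.0=s and ?nr2.0=s and ?nc2.0=s], auto)
  apply (rule cong_four_block_mat; rule eq_matI)
  using cc by (auto simp: algebra_simps)

lemma L_F:
  fixes R :: "'a::field_char_0 mat"
  assumes R: "R \<in> carrier_mat s s" and RR: "R * R = smult_mat (- (1/4)) (one_mat s)" and ee: "e * e = 1"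
  shows "four_block_mat R (zero_mat s s) (zero_mat s s) (smult_mat e R) * four_block_mat R (zero_mat s s) (zero_mat s s) (smult_mat e R)
   = smult_mat (- (1/4)) (one_mat (2*s))"
  using R unfolding mult_2
  apply (simp add: mult_four_block_mat[where ?nr1.0=s and ?n1.0=s and ?nr2.0=s and ?n2.0=s and ?nc1.0=s and ?nc2.0=s]
  mult_smult_distrib[where nr=s and n=s and nc=s]
  mult_smult_assoc_mat[where nr=s and n=s and nc=s] minus_fb[where ?nr1.0=s and ?nc1.0=s and ?nr2.0=s and ?nc2.0=s]
  uminus_fb[where ?nr1.0=s and ?nc1.0=s and ?nr2.0=s and ?nc2.0=s] minus_carrier_mat mult_carrier_mat smult_smult_mat
  smult_diff_mat smult_add_mat uminus_smult_mat zero_minus_mat minus_zero_mat' RR flip: four_block_one_mat)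
  apply (subst smult_four_block_mat[where ?nr1.0=s and ?nc1.0=s and ?nr2.0=s and ?nc2.0=s], auto)
  apply (rule cong_four_block_mat; rule eq_matI)
  using ee by (auto simp: algebra_simps)

lemma lie_carrier: "A \<in> carrier_mat n n \<Longrightarrow> B \<in> carrier_mat n n \<Longrightarrow> lie_br A B \<in> carrier_mat n n"
  unfolding lie_br_def by (auto intro: minus_carrier_mat)

lemma smult_uminus_mat': "a \<cdot>\<^sub>m (- A) = (-a) \<cdot>\<^sub>m (A :: 'a::comm_ring_1 mat)"
  by (rule eq_matI, auto)

lemma scal_comm1: "B \<in> carrier_mat s s \<Longrightarrow> lie_br (c \<cdot>\<^sub>m 1\<^sub>m s) (B :: 'a::comm_ring_1 mat) = 0\<^sub>m s s"
  unfolding lie_br_def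
  by (simp add: mult_smult_distrib[where nr=s and n=s and nc=s] mult_smult_assoc_mat[where nr=s and n=s and nc=s])

lemma scal_comm2: "B \<in> carrier_mat s s \<Longrightarrow> lie_br (B :: 'a::comm_ring_1 mat) (c \<cdot>\<^sub>m 1\<^sub>m s) = 0\<^sub>m s s"
  unfolding lie_br_def
  by (simp add: mult_smult_distrib[where nr=s and n=s and nc=s] mult_smult_assoc_mat[where nr=s and n=s and nc=s])

theorem mainTheorem8:
  fixes E :: "nat \<Rightarrow> nat \<Rightarrow> bool"
    and n r s :: nat
    and I :: "'a::field_char_0"
    and \<rho> :: "nat \<Rightarrow> 'a mat"
  assumes I: "I * I = -1"
    and D: "simply_laced_diagram n E"
    and r: "1 \<le> r" "r < n"
    and rho: "gen_spin_rep E r s \<rho>"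
  shows
    "((\<forall>i\<in>{1..r}. \<not> E i (r+1)) \<longrightarrow>
        (\<exists>\<rho>'. gen_spin_rep E (r+1) s \<rho>' \<and>
              (\<forall>i\<in>{1..r}. \<rho>' i = \<rho> i) \<and>
              \<rho>' (r+1) = smult_mat (I/2) (one_mat s)))
   \<and> ((\<exists>i\<in>{1..r}. E i (r+1)) \<longrightarrow>
        (\<exists>\<rho>'. gen_spin_rep E (r+1) (2*s) \<rho>' \<and>
              (\<forall>i\<in>{1..r}. \<rho>' i =
                  four_block_mat (\<rho> i) (zero_mat s s) (zero_mat s s)
                    (smult_mat (if E i (r+1) then -1 else 1) (\<rho> i))) \<and>
              \<rho>' (r+1) =
                  four_block_mat (zero_mat s s) (smult_mat (I/2) (one_mat s))
                    (smult_mat (I/2) (one_mat s)) (zero_mat s s)))"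
proof -
  from rho have rc: "\<And>i. i\<in>{1..r} \<Longrightarrow> \<rho> i \<in> carrier_mat s s"
    and rsq: "\<And>i. i\<in>{1..r} \<Longrightarrow> \<rho> i * \<rho> i = smult_mat (- (1/4)) (one_mat s)"
    and radj: "\<And>i j. i\<in>{1..r} \<Longrightarrow> j\<in>{1..r} \<Longrightarrow> E i j \<Longrightarrow> lie_br (\<rho> i) (lie_br (\<rho> i) (\<rho> j)) = - \<rho> j"
    and rcom: "\<And>i j. i\<in>{1..r} \<Longrightarrow> j\<in>{1..r} \<Longrightarrow> i \<noteq> j \<Longrightarrow> \<not> E i j \<Longrightarrow> lie_br (\<rho> i) (\<rho> j) = zero_mat s s"
    unfolding gen_spin_rep_def by auto
  from D have sym: "\<And>i j. E i j \<Longrightarrow> E j i" and irr: "\<And>i. \<not> E i i"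
    unfolding simply_laced_diagram_def by auto
  have cI: "(I/2) * (I/2) = - (1/4)" using I by (simp add: field_simps)
  have iset: "\<And>i. i \<in> {1..r+1} \<longleftrightarrow> i \<in> {1..r} \<or> i = r+1" using r by auto
  have notin: "r+1 \<notin> {1..r}" by auto
  have partA: "((\<forall>i\<in>{1..r}. \<not> E i (r+1)) \<longrightarrow>
        (\<exists>\<rho>'. gen_spin_rep E (r+1) s \<rho>' \<and>
              (\<forall>i\<in>{1..r}. \<rho>' i = \<rho> i) \<and>
              \<rho>' (r+1) = smult_mat (I/2) (one_mat s)))"
  proof
    assume na: "\<forall>i\<in>{1..r}. \<not> E i (r+1)"
    define \<rho>' where "\<rho>' = \<rho>(r+1 := smult_mat (I/2) (one_mat s))"
    have "gen_spin_rep E (r+1) s \<rho>'"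
      unfolding gen_spin_rep_def
    proof (intro conjI ballI impI)
      fix i assume "i \<in> {1..r+1}"
      then show "\<rho>' i \<in> carrier_mat s s" using rc unfolding \<rho>'_def iset by auto
    next
      fix i assume "i \<in> {1..r+1}"
      then show "\<rho>' i * \<rho>' i = smult_mat (- (1/4)) (one_mat s)"
        using rsq unfolding \<rho>'_def iset
        by (auto simp: mult_smult_distrib[where nr=s and n=s and nc=s]
            mult_smult_assoc_mat[where nr=s and n=s and nc=s] smult_smult_mat cI I)
    next
      fix i j assume i: "i \<in> {1..r+1}" and j: "j \<in> {1..r+1}" and e: "E i j"
      have "i \<in> {1..r} \<and> j \<in> {1..r}"
        using i j e na sym irr unfolding iset by metis
      then show "lie_br (\<rho>' i) (lie_br (\<rho>' i) (\<rho>' j)) = - \<rho>' j"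
        using radj e unfolding \<rho>'_def by auto
    next
      fix i j assume i: "i \<in> {1..r+1}" and j: "j \<in> {1..r+1}" and e: "i \<noteq> j \<and> \<not> E i j"
      show "lie_br (\<rho>' i) (\<rho>' j) = zero_mat s s"
      proof (cases "i = r+1")
        case True
        then have "j \<in> {1..r}" using j e iset by auto
        then show ?thesis using True rc[of j] unfolding \<rho>'_def by (simp add: scal_comm1)
      next
        case False
        then have ii: "i \<in> {1..r}" using i iset by auto
        show ?thesis
        proof (cases "j = r+1")
          case True
          then show ?thesis using ii rc[of i] unfolding \<rho>'_def by (simp add: scal_comm2)
        next
          case False
          then have "j \<in> {1..r}" using j iset by auto
          then show ?thesis using ii e rcom unfolding \<rho>'_def by auto
        qed
      qed
    qed
    then show "\<exists>\<rho>'. gen_spin_rep E (r+1) s \<rho>' \<and>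
              (\<forall>i\<in>{1..r}. \<rho>' i = \<rho> i) \<and>
              \<rho>' (r+1) = smult_mat (I/2) (one_mat s)"
      by (intro exI[of _ \<rho>']) (auto simp: \<rho>'_def)
  qed
  have partB: "((\<exists>i\<in>{1..r}. E i (r+1)) \<longrightarrow>
        (\<exists>\<rho>'. gen_spin_rep E (r+1) (2*s) \<rho>' \<and>
              (\<forall>i\<in>{1..r}. \<rho>' i =
                  four_block_mat (\<rho> i) (zero_mat s s) (zero_mat s s)
                    (smult_mat (if E i (r+1) then -1 else 1) (\<rho> i))) \<and>
              \<rho>' (r+1) =
                  four_block_mat (zero_mat s s) (smult_mat (I/2) (one_mat s))
                    (smult_mat (I/2) (one_mat s)) (zero_mat s s)))"
  proof
    define Y where "Y = four_block_mat (zero_mat s s) (smult_mat (I/2) (one_mat s))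
                    (smult_mat (I/2) (one_mat s)) (zero_mat s s)"
    define A where "A = (\<lambda>i. four_block_mat (\<rho> i) (zero_mat s s) (zero_mat s s)
                    (smult_mat (if E i (r+1) then -1 else 1) (\<rho> i)))"
    define \<rho>' where "\<rho>' = (\<lambda>i. if i = r+1 then Y else A i)"
    have Ac: "\<And>i. i \<in> {1..r} \<Longrightarrow> A i \<in> carrier_mat (2*s) (2*s)"
      unfolding A_def mult_2 using rc by auto
    have "gen_spin_rep E (r+1) (2*s) \<rho>'"
      unfolding gen_spin_rep_def
    proof (intro conjI ballI impI)
      fix i assume "i \<in> {1..r+1}"
      then show "\<rho>' i \<in> carrier_mat (2*s) (2*s)" using Ac unfolding \<rho>'_def iset Y_def mult_2 by auto
    next
      fix i assume "i \<in> {1..r+1}"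
      then show "\<rho>' i * \<rho>' i = smult_mat (- (1/4)) (one_mat (2*s))"
        unfolding iset
      proof
        assume ii: "i \<in> {1..r}"
        have "(if E i (r+1) then -1 else 1) * (if E i (r+1) then -1 else (1::'a)) = 1" by auto
        then show ?thesis using ii notin L_F[OF rc[OF ii] rsq[OF ii]] unfolding \<rho>'_def A_def by auto
      next
        assume "i = r+1"
        then show ?thesis using L_E[OF cI] unfolding \<rho>'_def Y_def by auto
      qed
    next
      fix i j assume i: "i \<in> {1..r+1}" and j: "j \<in> {1..r+1}" and e: "E i j"
      show "lie_br (\<rho>' i) (lie_br (\<rho>' i) (\<rho>' j)) = - \<rho>' j"
      proof (cases "i = r+1")
        case True
        then have jj: "j \<in> {1..r}" "E j (r+1)" using j e irr sym iset by auto
        then show ?thesis using True notin L_B[OF rc[OF jj(1)] cI] unfolding \<rho>'_def A_def Y_def by auto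
      next
        case False
        then have ii: "i \<in> {1..r}" using i iset by auto
        show ?thesis
        proof (cases "j = r+1")
          case True
          then show ?thesis using ii e notin L_A[OF rc[OF ii] rsq[OF ii]] unfolding \<rho>'_def A_def Y_def by auto
        next
          case False
          then have jj: "j \<in> {1..r}" using j iset by auto
          define ei where "ei = (if E i (r+1) then -1 else (1::'a))"
          define ej where "ej = (if E j (r+1) then -1 else (1::'a))"
          have eii: "ei * (ei * ej) = ej" unfolding ei_def by auto
          have cr: "\<rho> i \<in> carrier_mat s s" "\<rho> j \<in> carrier_mat s s" using rc ii jj by auto
          have "lie_br (A i) (lie_br (A i) (A j)) =
             four_block_mat (lie_br (\<rho> i) (lie_br (\<rho> i) (\<rho> j))) (zero_mat s s) (zero_mat s s)
               (lie_br (smult_mat ei (\<rho> i)) (lie_br (smult_mat ei (\<rho> i)) (smult_mat ej (\<rho> j))))"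
            unfolding A_def ei_def[symmetric] ej_def[symmetric] using cr
            by (simp add: fbD_lie lie_carrier)
          also have "\<dots> = four_block_mat (- \<rho> j) (zero_mat s s) (zero_mat s s) (smult_mat ej (- \<rho> j))"
            using cr radj[OF ii jj e] by (simp add: lie_smult lie_carrier eii)
          also have "\<dots> = - A j"
            unfolding A_def ej_def[symmetric] using cr
            by (simp add: fbD_uminus uminus_smult_mat smult_uminus_mat')
          finally show ?thesis using False \<open>i \<noteq> r+1\<close> unfolding \<rho>'_def by simp
        qed
      qed
    next
      fix i j assume i: "i \<in> {1..r+1}" and j: "j \<in> {1..r+1}" and e: "i \<noteq> j \<and> \<not> E i j"
      show "lie_br (\<rho>' i) (\<rho>' j) = zero_mat (2*s) (2*s)"
      proof (cases "i = r+1")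
        case True
        then have jj: "j \<in> {1..r}" "\<not> E j (r+1)" using j e sym iset by auto
        then show ?thesis using True notin L_D[OF rc[OF jj(1)]] unfolding \<rho>'_def A_def Y_def by auto
      next
        case False
        then have ii: "i \<in> {1..r}" using i iset by auto
        show ?thesis
        proof (cases "j = r+1")
          case True
          then show ?thesis using ii e notin L_C[OF rc[OF ii]] unfolding \<rho>'_def A_def Y_def by auto
        next
          case False
          then have jj: "j \<in> {1..r}" using j iset by auto
          define ei where "ei = (if E i (r+1) then -1 else (1::'a))"
          define ej where "ej = (if E j (r+1) then -1 else (1::'a))"
          have cr: "\<rho> i \<in> carrier_mat s s" "\<rho> j \<in> carrier_mat s s" using rc ii jj by auto
          have "lie_br (A i) (A j) =
             four_block_mat (lie_br (\<rho> i) (\<rho> j)) (zero_mat s s) (zero_mat s s)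
               (lie_br (smult_mat ei (\<rho> i)) (smult_mat ej (\<rho> j)))"
            unfolding A_def ei_def[symmetric] ej_def[symmetric] using cr
            by (simp add: fbD_lie)
          also have "\<dots> = zero_mat (2*s) (2*s)"
            using cr rcom[OF ii jj] e unfolding mult_2 by (simp add: lie_smult flip: four_block_zero_mat)
          finally show ?thesis using False \<open>i \<noteq> r+1\<close> unfolding \<rho>'_def by simp
        qed
      qed
    qed
    then show "\<exists>\<rho>'. gen_spin_rep E (r+1) (2*s) \<rho>' \<and>
              (\<forall>i\<in>{1..r}. \<rho>' i =
                  four_block_mat (\<rho> i) (zero_mat s s) (zero_mat s s)
                    (smult_mat (if E i (r+1) then -1 else 1) (\<rho> i))) \<and>
              \<rho>' (r+1) =
                  four_block_mat (zero_mat s s) (smult_mat (I/2) (one_mat s))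
                    (smult_mat (I/2) (one_mat s)) (zero_mat s s)"
      by (intro exI[of _ \<rho>']) (auto simp: \<rho>'_def A_def Y_def)
  qed
  show ?thesis using partA partB by blast
qed

end
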